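(* For every $n\ge1$, the number of minimal SR states on $K_n^0$ equals the number of spanning forests of the complete graph $K_n$ on $n$ labelled vertices.
   Context: $K_n^0$ is the complete graph on vertex set $\{0,1,\dots,n\}$ with sink $0$; every vertex has degree $n$. A configuration is $c\in\mathbb{Z}_{\ge0}^n$, stable if $c_i\le n-1$ for all $i$. SSM (parameter $p\in(0,1)$): an unstable vertex $i$, independently for each incident edge, sends one grain along it with probability $p$ (grains to the sink disappear), otherwise keeps it. The SSM Markov chain on stable configurations adds a grain at vertex $i$ with probability $\mu_i>0$ and then stabilises; SR = recurrent state of this chain. A minimal SR state is one that is minimal among SR states for the componentwise order. A spanning forest of a graph is an acyclic subgraph containing all its vertices. *)

theory Defs
  imports Main
begin

(* Graph K_n^0: vertices {0..n}, sink 0, non-sink vertices {1..n}; complete graph,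
   so every vertex has degree n.  A configuration is a function nat => nat
   vanishing outside {1..n}. *)

definition sconfig :: "nat \<Rightarrow> (nat \<Rightarrow> nat) \<Rightarrow> bool" where
  "sconfig n c \<longleftrightarrow> (\<forall>j. j \<notin> {1..n} \<longrightarrow> c j = 0)"

definition stable :: "nat \<Rightarrow> (nat \<Rightarrow> nat) \<Rightarrow> bool" where
  "stable n c \<longleftrightarrow> (\<forall>i\<in>{1..n}. c i \<le> n - 1)"

(* One SSM toppling with positive probability: an unstable vertex i sends one grain
   along each edge of a subset S of its incident edges (neighbours {0..n}-{i});
   grains sent to the sink 0 disappear.  Every subset S has probability
   p^|S| (1-p)^(n-|S|) > 0 for p in (0,1). *)
definition ssm_topple :: "nat \<Rightarrow> (nat \<Rightarrow> nat) \<Rightarrow> (nat \<Rightarrow> nat) \<Rightarrow> bool" where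
  "ssm_topple n c c' \<longleftrightarrow>
     (\<exists>i\<in>{1..n}. c i \<ge> n \<and>
       (\<exists>S. S \<subseteq> {0..n} - {i} \<and>
          c' = (\<lambda>j. if j = i then c i - card S
                     else if j \<in> S \<and> j \<noteq> 0 then c j + 1 else c j)))"

definition stabilises_to :: "nat \<Rightarrow> (nat \<Rightarrow> nat) \<Rightarrow> (nat \<Rightarrow> nat) \<Rightarrow> bool" where
  "stabilises_to n c c' \<longleftrightarrow> (ssm_topple n)\<^sup>*\<^sup>* c c' \<and> stable n c'"

(* Positive-probability transition of the SSM Markov chain on stable configurations:
   add a grain at some vertex i (probability mu_i > 0), then stabilise. *)
definition ssm_step :: "nat \<Rightarrow> (nat \<Rightarrow> nat) \<Rightarrow> (nat \<Rightarrow> nat) \<Rightarrow> bool" where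
  "ssm_step n c c' \<longleftrightarrow> sconfig n c \<and> stable n c \<and>
     (\<exists>i\<in>{1..n}. stabilises_to n (c(i := c i + 1)) c')"

(* SR: recurrent state of the (finite) SSM Markov chain: every state reachable from c
   leads back to c. *)
definition SR :: "nat \<Rightarrow> (nat \<Rightarrow> nat) \<Rightarrow> bool" where
  "SR n c \<longleftrightarrow> sconfig n c \<and> stable n c \<and>
     (\<forall>c'. (ssm_step n)\<^sup>*\<^sup>* c c' \<longrightarrow> (ssm_step n)\<^sup>*\<^sup>* c' c)"

definition minimal_SR :: "nat \<Rightarrow> (nat \<Rightarrow> nat) \<Rightarrow> bool" where
  "minimal_SR n c \<longleftrightarrow> SR n c \<and>
     \<not> (\<exists>c'. SR n c' \<and> c' \<noteq> c \<and> (\<forall>i\<in>{1..n}. c' i \<le> c i))"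

definition Kn_edges :: "nat \<Rightarrow> nat set set" where
  "Kn_edges n = {{u, v} | u v. u \<in> {1..n} \<and> v \<in> {1..n} \<and> u \<noteq> v}"

definition has_cycle :: "nat set set \<Rightarrow> bool" where
  "has_cycle F \<longleftrightarrow> (\<exists>vs. length vs \<ge> 3 \<and> distinct vs \<and>
      (\<forall>i < length vs. {vs ! i, vs ! ((i + 1) mod length vs)} \<in> F))"

definition spanning_forest_Kn :: "nat \<Rightarrow> nat set set \<Rightarrow> bool" where
  "spanning_forest_Kn n F \<longleftrightarrow> F \<subseteq> Kn_edges n \<and> \<not> has_cycle F"

end

theory Submission
  imports Defs
begin

definition orient :: "'e set \<Rightarrow> ('e \<Rightarrow> nat \<times> nat) \<Rightarrow> ('e \<Rightarrow> nat) \<Rightarrow> bool" where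
  "orient E ends H \<longleftrightarrow> (\<forall>e\<in>E. H e = fst (ends e) \<or> H e = snd (ends e))"

definition indeg :: "'e set \<Rightarrow> ('e \<Rightarrow> nat) \<Rightarrow> nat \<Rightarrow> nat" where
  "indeg E H x = card {e\<in>E. H e = x}"

definition Dset :: "'e set \<Rightarrow> ('e \<Rightarrow> nat \<times> nat) \<Rightarrow> (nat \<Rightarrow> nat) set" where
  "Dset E ends = {indeg E H | H. orient E ends H}"

definition verts :: "('e \<Rightarrow> nat \<times> nat) \<Rightarrow> 'e set \<Rightarrow> nat set" where
  "verts ends J = (\<Union>e\<in>J. {fst (ends e), snd (ends e)})"

definition forest :: "'e set \<Rightarrow> ('e \<Rightarrow> nat \<times> nat) \<Rightarrow> 'e set \<Rightarrow> bool" where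
  "forest E ends I \<longleftrightarrow> I \<subseteq> E \<and> (\<forall>J\<subseteq>I. J \<noteq> {} \<longrightarrow> card J < card (verts ends J))"

definition net :: "('e \<Rightarrow> nat) \<Rightarrow> ('e \<Rightarrow> nat) \<Rightarrow> 'e set \<Rightarrow> nat \<Rightarrow> int" where
  "net T H K x = int (card {e\<in>K. T e = x}) - int (card {e\<in>K. H e = x})"

lemma card_split_filter:
  assumes "finite E" "P \<subseteq> E"
  shows "card {e\<in>E. f e = x} = card {e\<in>E - P. f e = x} + card {e\<in>P. f e = x}"
proof -
  have "{e\<in>E. f e = x} = {e\<in>E - P. f e = x} \<union> {e\<in>P. f e = x}" using assms by auto
  moreover have "finite {e\<in>E - P. f e = x}" "finite {e\<in>P. f e = x}"
    using assms by (auto intro: finite_subset)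
  ultimately show ?thesis by (simp add: card_Un_disjoint disjoint_iff)
qed

lemma net_remove:
  assumes "finite K" "e \<in> K"
  shows "net T H K x = net T H (K - {e}) x + (if T e = x then 1 else 0) - (if H e = x then 1 else 0)"
proof -
  have a: "card {e'\<in>K. f e' = x} = card {e'\<in>K - {e}. f e' = x} + (if f e = x then 1 else 0)" for f :: "_ \<Rightarrow> nat"
    using card_split_filter[OF assms(1), of "{e}" f x] assms by (auto simp: Collect_conv_if)
  show ?thesis unfolding net_def using a[of T] a[of H] by simp
qed

lemma net_insert:
  assumes "finite P" "e \<notin> P"
  shows "net T H (insert e P) x = net T H P x + (if T e = x then 1 else 0) - (if H e = x then 1 else 0)"
  using net_remove[of "insert e P" e T H x] assms by simp

lemma flow:
  assumes "finite K" "\<forall>e\<in>K. T e \<noteq> H e" "net T H K v > 0"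
  shows "\<exists>P w. P \<subseteq> K \<and> net T H K w < 0 \<and>
           (\<forall>x. net T H P x = (if x = v then 1 else 0) - (if x = w then 1 else 0))"
  using assms
proof (induction "card K" arbitrary: K v rule: less_induct)
  case less
  have "card {e\<in>K. T e = v} > 0" using less.prems(3) unfolding net_def by linarith
  then have "{e\<in>K. T e = v} \<noteq> {}" by (metis card.empty less_irrefl)
  then obtain e where e: "e \<in> K" "T e = v" by blast
  define y where "y = H e"
  have yv: "y \<noteq> v" using less.prems(2) e y_def by auto
  have nr: "\<And>x. net T H K x = net T H (K - {e}) x + (if T e = x then 1 else 0) - (if H e = x then 1 else 0)"
    by (rule net_remove[OF less.prems(1) e(1)])
  show ?case
  proof (cases "net T H K y < 0")
    case True
    have "\<forall>x. net T H {e} x = (if x = v then 1 else 0) - (if x = y then 1 else 0)"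
      using net_insert[of "{}" e T H] e y_def by (auto simp: net_def)
    then show ?thesis using True e by blast
  next
    case False
    have Ky: "net T H (K - {e}) y > 0" using nr[of y] False e yv y_def by auto
    moreover have "card (K - {e}) < card K" using e less.prems(1) by (metis card_Diff1_less)
    ultimately obtain P w where P: "P \<subseteq> K - {e}" "net T H (K - {e}) w < 0"
      "\<forall>x. net T H P x = (if x = y then 1 else 0) - (if x = w then 1 else 0)"
      using less.hyps[of "K - {e}" y] less.prems(1,2) by blast
    have eP: "e \<notin> P" using P by auto
    have fP: "finite P" using P less.prems(1) finite_subset by blast
    have wy: "w \<noteq> y" using P(2) Ky by auto
    have wv: "w \<noteq> v" using P(2) nr[of v] e yv y_def less.prems(3) by auto
    have "net T H K w < 0" using nr[of w] wy wv e y_def P(2) by auto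
    moreover have "\<forall>x. net T H (insert e P) x = (if x = v then 1 else 0) - (if x = w then 1 else 0)"
      using net_insert[OF fP eP] P(3) e y_def yv by auto
    moreover have "insert e P \<subseteq> K" using P e by auto
    ultimately show ?thesis by blast
  qed
qed

lemma shift:
  assumes fin: "finite E" and o1: "orient E ends H1" and o2: "orient E ends H2"
    and ab: "a \<noteq> b"
    and oth: "\<forall>x. x \<noteq> a \<longrightarrow> x \<noteq> b \<longrightarrow> indeg E H1 x = indeg E H2 x"
    and sm: "indeg E H1 a + indeg E H1 b = indeg E H2 a + indeg E H2 b"
    and gt: "indeg E H1 a > indeg E H2 a"
  shows "(indeg E H1)(a := indeg E H1 a - 1, b := indeg E H1 b + 1) \<in> Dset E ends"
proof -
  define K where "K = {e\<in>E. H1 e \<noteq> H2 e}"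
  have KE: "K \<subseteq> E" and fK: "finite K" using fin by (auto simp: K_def)
  have sp: "indeg E H x = card {e\<in>E - K. H e = x} + card {e\<in>K. H e = x}" for H :: "_ \<Rightarrow> nat" and x
    unfolding indeg_def by (rule card_split_filter[OF fin KE])
  have eq: "{e\<in>E - K. H1 e = x} = {e\<in>E - K. H2 e = x}" for x by (auto simp: K_def)
  have netK: "net H2 H1 K x = int (indeg E H2 x) - int (indeg E H1 x)" for x
    unfolding net_def using sp[of H1 x] sp[of H2 x] eq[of x] by simp
  have "net H2 H1 K b > 0" using netK[of b] sm gt by simp
  then obtain P w where P: "P \<subseteq> K" "net H2 H1 K w < 0"
    "\<forall>x. net H2 H1 P x = (if x = b then 1 else 0) - (if x = w then 1 else 0)"
    using flow[OF fK, of H2 H1 b] by (auto simp: K_def)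
  have wa: "w = a"
  proof (rule ccontr)
    assume "w \<noteq> a"
    moreover have "w \<noteq> b" using P(2) netK[of b] sm gt by auto
    ultimately show False using P(2) netK[of w] oth by auto
  qed
  define H where "H = (\<lambda>e. if e \<in> P then H2 e else H1 e)"
  have oH: "orient E ends H" using o1 o2 unfolding orient_def H_def by auto
  have PE: "P \<subseteq> E" using P KE by auto
  have fP: "finite P" using fK P finite_subset by blast
  have s1: "indeg E H x = card {e\<in>E - P. H1 e = x} + card {e\<in>P. H2 e = x}" for x
  proof -
    have "indeg E H x = card {e\<in>E - P. H e = x} + card {e\<in>P. H e = x}"
      unfolding indeg_def by (rule card_split_filter[OF fin PE])
    moreover have "{e\<in>E - P. H e = x} = {e\<in>E - P. H1 e = x}" "{e\<in>P. H e = x} = {e\<in>P. H2 e = x}"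
      by (auto simp: H_def)
    ultimately show ?thesis by simp
  qed
  have s2: "indeg E H1 x = card {e\<in>E - P. H1 e = x} + card {e\<in>P. H1 e = x}" for x
    unfolding indeg_def by (rule card_split_filter[OF fin PE])
  have ix: "int (indeg E H x) = int (indeg E H1 x) + (if x = b then 1 else 0) - (if x = a then 1 else 0)" for x
    using s1[of x] s2[of x] P(3)[rule_format, of x] wa ab unfolding net_def
    by (cases "x = b"; cases "x = a"; simp)
  have "(indeg E H1)(a := indeg E H1 a - 1, b := indeg E H1 b + 1) = indeg E H"
  proof
    fix x
    show "((indeg E H1)(a := indeg E H1 a - 1, b := indeg E H1 b + 1)) x = indeg E H x"
      using ix[of x] ab gt by auto
  qed
  then show ?thesis using oH unfolding Dset_def by blast
qed


definition inc :: "nat \<Rightarrow> (nat \<Rightarrow> nat) \<Rightarrow> nat \<Rightarrow> nat" where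
  "inc x d = d(x := d x + 1)"

lemma inj_inc: "inj (inc x)"
proof (rule injI)
  fix d1 d2 assume h: "inc x d1 = inc x d2"
  show "d1 = d2"
  proof
    fix y show "d1 y = d2 y" using fun_cong[OF h, of y] by (cases "y = x") (auto simp: inc_def)
  qed
qed

lemma indeg_cong: "(\<And>e. e \<in> E \<Longrightarrow> H e = H' e) \<Longrightarrow> indeg E H = indeg E H'"
  unfolding indeg_def by (intro ext arg_cong[where f=card]) auto

lemma indeg_insert:
  assumes "finite E" "e \<notin> E"
  shows "indeg (insert e E) H = inc (H e) (indeg E H)"
proof
  fix x
  have "{e'\<in>insert e E. H e' = x} = (if H e = x then insert e {e'\<in>E. H e' = x} else {e'\<in>E. H e' = x})"
    by auto
  then show "indeg (insert e E) H x = inc (H e) (indeg E H) x"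
    using assms unfolding indeg_def inc_def by auto
qed

lemma Dset_empty: "Dset {} ends = {\<lambda>_. 0}"
  unfolding Dset_def indeg_def orient_def by auto

lemma Dset_insert:
  assumes "finite E" "e \<notin> E"
  shows "Dset (insert e E) ends = inc (fst (ends e)) ` Dset E ends \<union> inc (snd (ends e)) ` Dset E ends"
proof
  show "Dset (insert e E) ends \<subseteq> inc (fst (ends e)) ` Dset E ends \<union> inc (snd (ends e)) ` Dset E ends"
  proof
    fix d assume "d \<in> Dset (insert e E) ends"
    then obtain H where H: "orient (insert e E) ends H" "d = indeg (insert e E) H" unfolding Dset_def by blast
    have o: "orient E ends H" using H(1) unfolding orient_def by auto
    have "d = inc (H e) (indeg E H)" using H(2) indeg_insert[OF assms] by simp
    moreover have "indeg E H \<in> Dset E ends" using o unfolding Dset_def by blast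
    moreover have "H e = fst (ends e) \<or> H e = snd (ends e)" using H(1) unfolding orient_def by auto
    ultimately show "d \<in> inc (fst (ends e)) ` Dset E ends \<union> inc (snd (ends e)) ` Dset E ends" by auto
  qed
next
  have *: "inc y d \<in> Dset (insert e E) ends" if dD: "d \<in> Dset E ends" and yy: "y = fst (ends e) \<or> y = snd (ends e)" for d y
  proof -
    obtain H where H: "orient E ends H" "d = indeg E H" using dD unfolding Dset_def by blast
    define H' where "H' = H(e := y)"
    have "orient (insert e E) ends H'" using H(1) yy unfolding orient_def H'_def by auto
    moreover have "indeg E H' = indeg E H" using assms(2) by (intro indeg_cong) (auto simp: H'_def)
    moreover have "indeg (insert e E) H' = inc y (indeg E H')" using indeg_insert[OF assms] by (simp add: H'_def)
    ultimately have "inc y d = indeg (insert e E) H'" "orient (insert e E) ends H'" using H(2) by simp_all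
    then show ?thesis unfolding Dset_def by blast
  qed
  show "inc (fst (ends e)) ` Dset E ends \<union> inc (snd (ends e)) ` Dset E ends \<subseteq> Dset (insert e E) ends"
    using * by blast
qed

lemma finite_Dset: "finite E \<Longrightarrow> finite (Dset E ends)"
proof (induction E rule: finite_induct)
  case empty then show ?case by (simp add: Dset_empty)
next
  case (insert e E) then show ?case by (simp add: Dset_insert)
qed

definition mrg :: "nat \<Rightarrow> nat \<Rightarrow> (nat \<Rightarrow> nat) \<Rightarrow> nat \<Rightarrow> nat" where
  "mrg a b d = d(a := d a + d b, b := 0)"

definition ren :: "nat \<Rightarrow> nat \<Rightarrow> nat \<Rightarrow> nat" where
  "ren a b x = (if x = b then a else x)"

lemma Dset_contract:
  assumes fin: "finite E" and ab: "a \<noteq> b"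
  shows "Dset E (\<lambda>e. (ren a b (fst (ends e)), ren a b (snd (ends e)))) = mrg a b ` Dset E ends"
proof -
  have key: "indeg E (\<lambda>e. ren a b (H e)) = mrg a b (indeg E H)" for H
  proof
    fix x
    show "indeg E (\<lambda>e. ren a b (H e)) x = mrg a b (indeg E H) x"
    proof (cases "x = b")
      case True
      then have eq0: "{e\<in>E. ren a b (H e) = x} = {}" using ab by (auto simp: ren_def)
      have "indeg E (\<lambda>e. ren a b (H e)) x = 0" unfolding indeg_def eq0 by simp
      then show ?thesis using True ab by (simp add: mrg_def)
    next
      case False
      show ?thesis
      proof (cases "x = a")
        case True
        have "{e\<in>E. ren a b (H e) = x} = {e\<in>E. H e = a} \<union> {e\<in>E. H e = b}"
          using True ab by (auto simp: ren_def)
        moreover have "card ({e\<in>E. H e = a} \<union> {e\<in>E. H e = b}) = card {e\<in>E. H e = a} + card {e\<in>E. H e = b}"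
          using fin ab by (intro card_Un_disjoint) auto
        ultimately show ?thesis using True ab by (simp add: indeg_def mrg_def)
      next
        case False
        have "{e\<in>E. ren a b (H e) = x} = {e\<in>E. H e = x}"
          using False \<open>x \<noteq> b\<close> by (auto simp: ren_def)
        then show ?thesis using False \<open>x \<noteq> b\<close> by (simp add: indeg_def mrg_def)
      qed
    qed
  qed
  show ?thesis
  proof
    show "Dset E (\<lambda>e. (ren a b (fst (ends e)), ren a b (snd (ends e)))) \<subseteq> mrg a b ` Dset E ends"
    proof
      fix d assume "d \<in> Dset E (\<lambda>e. (ren a b (fst (ends e)), ren a b (snd (ends e))))"
      then obtain H' where H': "orient E (\<lambda>e. (ren a b (fst (ends e)), ren a b (snd (ends e)))) H'" "d = indeg E H'"
        unfolding Dset_def by blast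
      define H where "H = (\<lambda>e. if H' e = ren a b (fst (ends e)) then fst (ends e) else snd (ends e))"
      have oH: "orient E ends H" unfolding orient_def H_def by auto
      have "\<And>e. e \<in> E \<Longrightarrow> H' e = ren a b (H e)" using H'(1) unfolding orient_def H_def by auto
      then have "d = indeg E (\<lambda>e. ren a b (H e))" using H'(2) by (auto intro: indeg_cong)
      then have "d = mrg a b (indeg E H)" using key by simp
      then show "d \<in> mrg a b ` Dset E ends" using oH unfolding Dset_def by blast
    qed
  next
    show "mrg a b ` Dset E ends \<subseteq> Dset E (\<lambda>e. (ren a b (fst (ends e)), ren a b (snd (ends e))))"
    proof
      fix d assume "d \<in> mrg a b ` Dset E ends"
      then obtain H where H: "orient E ends H" "d = mrg a b (indeg E H)" unfolding Dset_def by blast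
      have "orient E (\<lambda>e. (ren a b (fst (ends e)), ren a b (snd (ends e)))) (\<lambda>e. ren a b (H e))"
        using H(1) unfolding orient_def by auto
      moreover have "d = indeg E (\<lambda>e. ren a b (H e))" using H(2) key by simp
      ultimately show "d \<in> Dset E (\<lambda>e. (ren a b (fst (ends e)), ren a b (snd (ends e))))"
        unfolding Dset_def by blast
    qed
  qed
qed

lemma inc_eq_shift:
  assumes "a \<noteq> b" "inc b d = inc a d'"
  shows "d a \<ge> 1 \<and> d' = d(a := d a - 1, b := d b + 1)"
proof -
  have h: "d x + (if x = b then 1 else 0) = d' x + (if x = a then 1 else 0)" for x
    using fun_cong[OF assms(2), of x] assms(1) unfolding inc_def by (cases "x = a"; cases "x = b") auto
  have "d a \<ge> 1" using h[of a] assms(1) by simp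
  moreover have "d' = d(a := d a - 1, b := d b + 1)"
  proof
    fix x show "d' x = (d(a := d a - 1, b := d b + 1)) x" using h[of x] assms(1) by (cases "x = a"; cases "x = b") auto
  qed
  ultimately show ?thesis by blast
qed

lemma top_count:
  assumes fin: "finite E" and ab: "a \<noteq> b"
  shows "card {d\<in>Dset E ends. inc b d \<notin> inc a ` Dset E ends} = card (mrg a b ` Dset E ends)"
proof -
  define D where "D = Dset E ends"
  have mrg_eq: "mrg a b d1 = mrg a b d2 \<Longrightarrow> (\<forall>x. x \<noteq> a \<longrightarrow> x \<noteq> b \<longrightarrow> d1 x = d2 x) \<and> d1 a + d1 b = d2 a + d2 b" for d1 d2
  proof -
    assume h0: "mrg a b d1 = mrg a b d2"
    have h: "mrg a b d1 x = mrg a b d2 x" for x using h0 by simp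
    have 1: "\<forall>x. x \<noteq> a \<longrightarrow> x \<noteq> b \<longrightarrow> d1 x = d2 x"
    proof (intro allI impI)
      fix x assume "x \<noteq> a" "x \<noteq> b" then show "d1 x = d2 x" using h[of x] by (simp add: mrg_def)
    qed
    have 2: "d1 a + d1 b = d2 a + d2 b" using h[of a] ab by (simp add: mrg_def)
    show ?thesis using 1 2 by blast
  qed
  have shift_top: False if t1: "d1 \<in> D" and t2: "d2 \<in> D" and t3: "inc b d1 \<notin> inc a ` D" and t4: "mrg a b d1 = mrg a b d2" and t5: "d1 a > d2 a" for d1 d2
  proof -
    obtain H1 where H1: "orient E ends H1" "d1 = indeg E H1" using t1 unfolding D_def Dset_def by blast
    obtain H2 where H2: "orient E ends H2" "d2 = indeg E H2" using t2 unfolding D_def Dset_def by blast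
    have m: "(\<forall>x. x \<noteq> a \<longrightarrow> x \<noteq> b \<longrightarrow> d1 x = d2 x) \<and> d1 a + d1 b = d2 a + d2 b" using mrg_eq t4 by blast
    have "d1(a := d1 a - 1, b := d1 b + 1) \<in> D"
      using shift[OF fin H1(1) H2(1) ab, unfolded H1(2)[symmetric] H2(2)[symmetric]] m t5
      unfolding D_def by blast
    moreover have "inc b d1 = inc a (d1(a := d1 a - 1, b := d1 b + 1))"
    proof
      fix x show "inc b d1 x = inc a (d1(a := d1 a - 1, b := d1 b + 1)) x"
        using ab t5 by (cases "x = a"; cases "x = b") (auto simp: inc_def)
    qed
    ultimately show False using t3 by blast
  qed
  have "bij_betw (mrg a b) {d\<in>D. inc b d \<notin> inc a ` D} (mrg a b ` D)"
  proof (rule bij_betw_imageI)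
    show "inj_on (mrg a b) {d\<in>D. inc b d \<notin> inc a ` D}"
    proof (rule inj_onI)
      fix d1 d2 assume d1: "d1 \<in> {d\<in>D. inc b d \<notin> inc a ` D}" and d2: "d2 \<in> {d\<in>D. inc b d \<notin> inc a ` D}"
        and eq: "mrg a b d1 = mrg a b d2"
      have m: "(\<forall>x. x \<noteq> a \<longrightarrow> x \<noteq> b \<longrightarrow> d1 x = d2 x) \<and> d1 a + d1 b = d2 a + d2 b" using mrg_eq[OF eq] .
      have "\<not> d1 a > d2 a"
      proof
        assume g: "d1 a > d2 a" show False using d1 d2 by (intro shift_top[OF _ _ _ eq g]) auto
      qed
      moreover have "\<not> d2 a > d1 a"
      proof
        assume g: "d2 a > d1 a" show False using d1 d2 by (intro shift_top[OF _ _ _ eq[symmetric] g]) auto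
      qed
      ultimately have "d1 a = d2 a" by simp
      then have "d1 b = d2 b" using m by simp
      show "d1 = d2"
      proof
        fix x show "d1 x = d2 x" using m \<open>d1 a = d2 a\<close> \<open>d1 b = d2 b\<close> by (cases "x = a"; cases "x = b") auto
      qed
    qed
  next
    show "mrg a b ` {d\<in>D. inc b d \<notin> inc a ` D} = mrg a b ` D"
    proof
      show "mrg a b ` {d\<in>D. inc b d \<notin> inc a ` D} \<subseteq> mrg a b ` D" by blast
    next
      show "mrg a b ` D \<subseteq> mrg a b ` {d\<in>D. inc b d \<notin> inc a ` D}"
      proof
        fix m assume "m \<in> mrg a b ` D"
        then obtain d where d: "d \<in> D" "m = mrg a b d" by blast
        define P where "P = (\<lambda>d'. d' \<in> D \<and> mrg a b d' = m)"
        have "\<forall>y. P y \<longrightarrow> y b < d a + d b + 1"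
        proof (intro allI impI)
          fix y assume "P y"
          then have "mrg a b y = mrg a b d" using d(2) unfolding P_def by simp
          then have "y a + y b = d a + d b" using mrg_eq by blast
          then show "y b < d a + d b + 1" by simp
        qed
        moreover have "P d" using d unfolding P_def by simp
        ultimately obtain d' where d': "P d'" "\<forall>y. P y \<longrightarrow> y b \<le> d' b"
          using ex_has_greatest_nat[of P d "\<lambda>y. y b"] by blast
        have "inc b d' \<notin> inc a ` D"
        proof
          assume "inc b d' \<in> inc a ` D"
          then obtain d'' where d'': "d'' \<in> D" "inc b d' = inc a d''" by blast
          have sh: "d' a \<ge> 1 \<and> d'' = d'(a := d' a - 1, b := d' b + 1)" using inc_eq_shift[OF ab d''(2)] .
          have "mrg a b d'' = mrg a b d'"
          proof
            fix x show "mrg a b d'' x = mrg a b d' x" using sh ab unfolding mrg_def by (cases "x = a"; cases "x = b") auto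
          qed
          then have "P d''" using d'' d'(1) unfolding P_def by simp
          then have "d'' b \<le> d' b" using d'(2) by blast
          then show False using sh ab by simp
        qed
        then show "m \<in> mrg a b ` {d\<in>D. inc b d \<notin> inc a ` D}" using d' unfolding P_def by blast
      qed
    qed
  qed
  then show ?thesis unfolding D_def by (rule bij_betw_same_card)
qed


lemma verts_finite: "finite J \<Longrightarrow> finite (verts ends J)"
  unfolding verts_def by auto

lemma verts_insert: "verts ends (insert e J) = insert (fst (ends e)) (insert (snd (ends e)) (verts ends J))"
  unfolding verts_def by auto

lemma verts_empty: "verts ends {} = {}"
  unfolding verts_def by auto

lemma verts_ren: "verts (\<lambda>e. (ren a b (fst (ends e)), ren a b (snd (ends e)))) J = ren a b ` verts ends J"
  unfolding verts_def by auto

lemma forest_empty: "{I. forest {} ends I} = {{}}"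
  unfolding forest_def by auto

lemma forest_mono: "forest E ends I \<Longrightarrow> forest (insert e E) ends I"
  unfolding forest_def by auto

lemma forest_del: "forest (insert e E) ends I \<Longrightarrow> e \<notin> I \<Longrightarrow> forest E ends I"
  unfolding forest_def by auto

lemma forest_loop:
  assumes "fst (ends e) = snd (ends e)" "forest E ends I"
  shows "e \<notin> I"
proof
  assume "e \<in> I"
  then have "card {e} < card (verts ends {e})" using assms(2) unfolding forest_def by blast
  moreover have "verts ends {e} = {fst (ends e)}" using assms(1) unfolding verts_def by auto
  ultimately show False by simp
qed

lemma forest_contract:
  assumes fin: "finite E" and eE: "e \<notin> E" and ab: "fst (ends e) \<noteq> snd (ends e)" and IE: "I \<subseteq> E"
  shows "forest (insert e E) ends (insert e I) \<longleftrightarrow>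
         forest E (\<lambda>x. (ren (fst (ends e)) (snd (ends e)) (fst (ends x)), ren (fst (ends e)) (snd (ends e)) (snd (ends x)))) I"
proof -
  define a where "a = fst (ends e)"
  define b where "b = snd (ends e)"
  have ab': "a \<noteq> b" using ab a_def b_def by simp
  define ends' where "ends' = (\<lambda>e. (ren a b (fst (ends e)), ren a b (snd (ends e))))"
  have vr: "verts ends' J = ren a b ` verts ends J" for J unfolding ends'_def by (rule verts_ren)
  have vi: "verts ends (insert e J) = insert a (insert b (verts ends J))" for J
    unfolding a_def b_def by (rule verts_insert)
  have "forest (insert e E) ends (insert e I) \<longleftrightarrow> forest E ends' I"
  proof
    assume hI: "forest E ends' I"
    show "forest (insert e E) ends (insert e I)"
      unfolding forest_def
    proof (intro conjI allI impI)
      show "insert e I \<subseteq> insert e E" using IE by auto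
    next
      fix J assume J: "J \<subseteq> insert e I" "J \<noteq> {}"
      have fJ: "finite J" using J(1) IE fin by (meson finite_insert finite_subset insert_mono)
      show "card J < card (verts ends J)"
      proof (cases "e \<in> J")
        case False
        then have "J \<subseteq> I" using J by auto
        then have "card J < card (verts ends' J)" using hI J(2) unfolding forest_def by blast
        also have "\<dots> \<le> card (verts ends J)" unfolding vr by (rule card_image_le[OF verts_finite[OF fJ]])
        finally show ?thesis .
      next
        case True
        define J' where "J' = J - {e}"
        have JJ: "J = insert e J'" "e \<notin> J'" using True J'_def by auto
        have fJ': "finite J'" using fJ J'_def by simp
        have cJ: "card J = card J' + 1" using JJ fJ' by simp
        define W where "W = insert a (insert b (verts ends J'))"
        have fW: "finite W" using verts_finite[OF fJ'] W_def by simp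
        have VW: "verts ends J = W" using JJ(1) vi W_def by simp
        show ?thesis
        proof (cases "J' = {}")
          case True
          then show ?thesis using cJ VW W_def ab' by (simp add: verts_empty)
        next
          case False
          have "J' \<subseteq> I" using J JJ by auto
          then have c1: "card J' < card (ren a b ` verts ends J')" using hI False vr unfolding forest_def by metis
          have "ren a b ` verts ends J' \<subseteq> W - {b}" using ab' unfolding W_def ren_def by auto
          then have "card (ren a b ` verts ends J') \<le> card (W - {b})" using fW by (intro card_mono) auto
          also have "\<dots> = card W - 1" using fW W_def by simp
          finally show ?thesis using c1 cJ VW by simp
        qed
      qed
    qed
  next
    assume hF: "forest (insert e E) ends (insert e I)"
    show "forest E ends' I"
      unfolding forest_def
    proof (intro conjI allI impI)
      show "I \<subseteq> E" by (rule IE)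
    next
      fix J assume J: "J \<subseteq> I" "J \<noteq> {}"
      have "J \<subseteq> E" using J(1) IE by blast
      then have fJ: "finite J" using fin by (rule finite_subset)
      define V where "V = verts ends J"
      have fV: "finite V" using verts_finite[OF fJ] V_def by simp
      have hF': "\<And>J. J \<subseteq> insert e I \<Longrightarrow> J \<noteq> {} \<Longrightarrow> card J < card (verts ends J)"
        using hF unfolding forest_def by blast
      have JI: "J \<subseteq> insert e I" using J(1) by blast
      have h1: "card J < card V" unfolding V_def by (rule hF'[OF JI J(2)])
      have eJ: "e \<notin> J" using J IE eE by auto
      have JI2: "insert e J \<subseteq> insert e I" using J(1) by blast
      have "card (insert e J) < card (verts ends (insert e J))" by (rule hF'[OF JI2]) simp
      then have h2: "card J + 1 < card (insert a (insert b V))" using eJ fJ vi V_def by simp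
      show "card J < card (verts ends' J)"
      proof (cases "b \<in> V")
        case False
        have "ren a b ` V = V" using False unfolding ren_def by force
        then show ?thesis using h1 vr V_def by simp
      next
        case True
        have "ren a b ` V = insert a V - {b}"
        proof
          show "ren a b ` V \<subseteq> insert a V - {b}" using ab' unfolding ren_def by auto
        next
          show "insert a V - {b} \<subseteq> ren a b ` V"
          proof
            fix x assume x: "x \<in> insert a V - {b}"
            show "x \<in> ren a b ` V"
            proof (cases "x = a")
              case True
              then have "x = ren a b b" unfolding ren_def by simp
              then show ?thesis using \<open>b \<in> V\<close> by blast
            next
              case False
              then have "x \<in> V" "x = ren a b x" using x unfolding ren_def by auto
              then show ?thesis by blast
            qed
          qed
        qed
        moreover have "card (insert a V - {b}) = card (insert a (insert b V)) - 1"
          using True fV ab' by (simp add: insert_absorb)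
        ultimately show ?thesis using h2 vr V_def by simp
      qed
    qed
  qed
  then show ?thesis unfolding ends'_def a_def b_def .
qed

lemma forest_fin: "finite E \<Longrightarrow> finite {I. forest E ends I}"
proof -
  assume f: "finite E"
  have "{I. forest E ends I} \<subseteq> Pow E" unfolding forest_def by auto
  moreover have "finite (Pow E)" using f by simp
  ultimately show ?thesis by (rule finite_subset)
qed

lemma card_inc_image: "card (inc x ` A) = card A"
  by (rule card_image[OF inj_on_subset[OF inj_inc subset_UNIV]])

lemma forest_loop_eq:
  assumes "fst (ends e) = snd (ends e)"
  shows "{I. forest (insert e E) ends I} = {I. forest E ends I}"
proof (intro equalityI subsetI)
  fix I assume "I \<in> {I. forest (insert e E) ends I}"
  then have h: "forest (insert e E) ends I" by simp
  have "e \<notin> I" by (rule forest_loop[where ends=ends, OF assms h])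
  then show "I \<in> {I. forest E ends I}" using forest_del[OF h] by simp
next
  fix I assume "I \<in> {I. forest E ends I}"
  then show "I \<in> {I. forest (insert e E) ends I}" using forest_mono by simp
qed

lemma forest_split:
  assumes fin: "finite E" and eE: "e \<notin> E" and ab: "fst (ends e) \<noteq> snd (ends e)"
  defines "ends' \<equiv> (\<lambda>x. (ren (fst (ends e)) (snd (ends e)) (fst (ends x)), ren (fst (ends e)) (snd (ends e)) (snd (ends x))))"
  shows "{I. forest (insert e E) ends I} = {I. forest E ends I} \<union> insert e ` {I. forest E ends' I}"
proof (intro equalityI subsetI)
  fix I assume "I \<in> {I. forest (insert e E) ends I}"
  then have I: "forest (insert e E) ends I" by simp
  show "I \<in> {I. forest E ends I} \<union> insert e ` {I. forest E ends' I}"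
  proof (cases "e \<in> I")
    case True
    have IE: "I - {e} \<subseteq> E" using I unfolding forest_def by auto
    have II: "I = insert e (I - {e})" using True by auto
    then have "forest (insert e E) ends (insert e (I - {e}))" using I by simp
    then have "forest E ends' (I - {e})"
      using forest_contract[where ends=ends, OF fin eE ab IE] unfolding ends'_def by simp
    then have "I \<in> insert e ` {I. forest E ends' I}" using II by blast
    then show ?thesis by (rule UnI2)
  next
    case False
    then have "forest E ends I" by (rule forest_del[OF I])
    then show ?thesis by simp
  qed
next
  fix I assume "I \<in> {I. forest E ends I} \<union> insert e ` {I. forest E ends' I}"
  then show "I \<in> {I. forest (insert e E) ends I}"
  proof (rule UnE)
    assume "I \<in> {I. forest E ends I}"
    then show ?thesis using forest_mono by simp
  next
    assume "I \<in> insert e ` {I. forest E ends' I}"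
    then obtain I' where I': "forest E ends' I'" "I = insert e I'" by blast
    have IE: "I' \<subseteq> E" using I'(1) unfolding forest_def by simp
    have "forest (insert e E) ends (insert e I')"
      using forest_contract[where ends=ends, OF fin eE ab IE] I'(1) unfolding ends'_def by simp
    then show ?thesis using I'(2) by simp
  qed
qed

lemma forest_split_card:
  assumes fin: "finite E" and eE: "e \<notin> E" and ab: "fst (ends e) \<noteq> snd (ends e)"
  defines "ends' \<equiv> (\<lambda>x. (ren (fst (ends e)) (snd (ends e)) (fst (ends x)), ren (fst (ends e)) (snd (ends e)) (snd (ends x))))"
  shows "card {I. forest (insert e E) ends I} = card {I. forest E ends I} + card {I. forest E ends' I}"
proof -
  have disj: "{I. forest E ends I} \<inter> insert e ` {I. forest E ends' I} = {}"
    using eE unfolding forest_def by auto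
  have injI: "inj_on (insert e) {I. forest E ends' I}"
  proof (rule inj_onI)
    fix I1 I2 assume a1: "I1 \<in> {I. forest E ends' I}" and a2: "I2 \<in> {I. forest E ends' I}"
      and eq: "insert e I1 = insert e I2"
    have "e \<notin> I1" "e \<notin> I2" using a1 a2 eE unfolding forest_def by auto
    then show "I1 = I2" using eq by (metis Diff_insert_absorb)
  qed
  have c2: "card (insert e ` {I. forest E ends' I}) = card {I. forest E ends' I}"
    by (rule card_image[OF injI])
  have "card ({I. forest E ends I} \<union> insert e ` {I. forest E ends' I})
        = card {I. forest E ends I} + card (insert e ` {I. forest E ends' I})"
    by (rule card_Un_disjoint[OF forest_fin[OF fin] finite_imageI[OF forest_fin[OF fin]] disj])
  then show ?thesis using forest_split[where ends=ends, OF fin eE ab] c2 unfolding ends'_def by simp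
qed

lemma Dset_split_card:
  assumes fin: "finite E" and eE: "e \<notin> E" and ab: "fst (ends e) \<noteq> snd (ends e)"
  shows "card (Dset (insert e E) ends) = card (Dset E ends) + card (mrg (fst (ends e)) (snd (ends e)) ` Dset E ends)"
proof -
  define a where "a = fst (ends e)"
  define b where "b = snd (ends e)"
  define D where "D = Dset E ends"
  have ab': "a \<noteq> b" using ab unfolding a_def b_def .
  have DI: "Dset (insert e E) ends = inc a ` D \<union> inc b ` D"
    unfolding a_def b_def D_def by (rule Dset_insert[OF fin eE])
  have fD: "finite D" unfolding D_def by (rule finite_Dset[OF fin])
  have u: "inc a ` D \<union> inc b ` D = inc a ` D \<union> (inc b ` D - inc a ` D)" by blast
  have "card (inc a ` D \<union> (inc b ` D - inc a ` D)) = card (inc a ` D) + card (inc b ` D - inc a ` D)"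
    by (rule card_Un_disjoint) (use fD in auto)
  moreover have "inc b ` D - inc a ` D = inc b ` {d\<in>D. inc b d \<notin> inc a ` D}" by auto
  moreover have "card {d\<in>D. inc b d \<notin> inc a ` D} = card (mrg a b ` D)"
    unfolding D_def by (rule top_count[OF fin ab'])
  ultimately have "card (Dset (insert e E) ends) = card D + card (mrg a b ` D)"
    unfolding DI u by (simp add: card_inc_image)
  then show ?thesis unfolding a_def b_def D_def .
qed

theorem D_F_count:
  assumes "finite E"
  shows "card (Dset E ends) = card {I. forest E ends I}"
  using assms
proof (induction E arbitrary: ends rule: finite_induct)
  case empty
  show ?case by (simp add: Dset_empty forest_empty)
next
  case (insert e E)
  show ?case
  proof (cases "fst (ends e) = snd (ends e)")
    case True
    have "Dset (insert e E) ends = inc (fst (ends e)) ` Dset E ends"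
      using Dset_insert[OF insert(1,2), of ends] True by simp
    then have "card (Dset (insert e E) ends) = card (Dset E ends)" by (simp add: card_inc_image)
    then show ?thesis using insert.IH[of ends] forest_loop_eq[where ends=ends and E=E, OF True] by simp
  next
    case False
    define ends' where "ends' = (\<lambda>x. (ren (fst (ends e)) (snd (ends e)) (fst (ends x)), ren (fst (ends e)) (snd (ends e)) (snd (ends x))))"
    have "mrg (fst (ends e)) (snd (ends e)) ` Dset E ends = Dset E ends'"
      unfolding ends'_def by (rule Dset_contract[OF insert(1) False, symmetric])
    then have "card (Dset (insert e E) ends) = card (Dset E ends) + card (Dset E ends')"
      using Dset_split_card[where ends=ends, OF insert(1,2) False] by simp
    also have "\<dots> = card {I. forest E ends I} + card {I. forest E ends' I}"
      using insert.IH[of ends] insert.IH[of ends'] by simp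
    also have "\<dots> = card {I. forest (insert e E) ends I}"
      using forest_split_card[where ends=ends, OF insert(1,2) False] unfolding ends'_def by simp
    finally show ?thesis .
  qed
qed

lemma has_cycle_mono: "has_cycle J \<Longrightarrow> J \<subseteq> F \<Longrightarrow> has_cycle F"
  unfolding has_cycle_def by blast

lemma mod_arith_aux:
  fixes i j k :: nat
  assumes k3: "3 \<le> k" and ik: "i < k" and jk: "j < k" and a4: "i = (j + 1) mod k" and a5: "j = (i + 1) mod k"
  shows False
proof (cases "j + 1 < k")
  case True
  have "(j + 1) mod k = j + 1" using True by (rule mod_less)
  then have i: "i = j + 1" using a4 by linarith
  show False
  proof (cases "i + 1 < k")
    case True
    have "(i + 1) mod k = i + 1" using True by (rule mod_less)
    then show False using a5 i by linarith
  next
    case False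
    then have ik1: "i + 1 = k" using ik by linarith
    then have "(i + 1) mod k = 0" by simp
    then have "j = 0" using a5 by linarith
    then show False using i ik1 k3 by linarith
  qed
next
  case False
  then have jk1: "j + 1 = k" using jk by linarith
  then have "(j + 1) mod k = 0" by simp
  then have "i = 0" using a4 by linarith
  moreover have "(0 + 1) mod k = (1::nat)" using k3 by simp
  ultimately have "j = 1" using a5 by simp
  then show False using jk1 k3 by linarith
qed

lemma cycle_dense:
  assumes "has_cycle F"
  shows "\<exists>J\<subseteq>F. J \<noteq> {} \<and> card (\<Union>J) \<le> card J \<and> finite J"
proof -
  obtain vs where vs: "length vs \<ge> 3" "distinct vs"
    "\<forall>i < length vs. {vs ! i, vs ! ((i + 1) mod length vs)} \<in> F"
    using assms unfolding has_cycle_def by blast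
  define k where "k = length vs"
  define f where "f = (\<lambda>i. {vs ! i, vs ! ((i + 1) mod k)})"
  have kpos: "0 < k" using vs(1) unfolding k_def by linarith
  define J where "J = f ` {..<k}"
  have JF: "J \<subseteq> F" using vs(3) unfolding J_def f_def k_def by auto
  have "0 \<in> {..<k}" using vs(1) unfolding k_def by (cases vs) auto
  then have Jne: "J \<noteq> {}" unfolding J_def by blast
  have inj: "inj_on f {..<k}"
  proof (rule inj_onI)
    fix i j assume i: "i \<in> {..<k}" and j: "j \<in> {..<k}" and eq: "f i = f j"
    have ik: "i < k" and jk: "j < k" using i j by auto
    have mi: "(i + 1) mod k < k" and mj: "(j + 1) mod k < k" using mod_less_divisor[OF kpos] by auto
    have nth: "\<And>a b. a < k \<Longrightarrow> b < k \<Longrightarrow> vs ! a = vs ! b \<longleftrightarrow> a = b"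
      using vs(2) k_def by (simp add: nth_eq_iff_index_eq)
    have "vs ! i \<in> f j" using eq unfolding f_def by auto
    then have 1: "i = j \<or> i = (j + 1) mod k" unfolding f_def using nth[OF ik jk] nth[OF ik mj] by auto
    have "vs ! j \<in> f i" using eq unfolding f_def by auto
    then have 2: "j = i \<or> j = (i + 1) mod k" unfolding f_def using nth[OF jk ik] nth[OF jk mi] by auto
    show "i = j"
    proof (rule ccontr)
      assume "i \<noteq> j"
      then have a: "i = (j + 1) mod k" and b: "j = (i + 1) mod k" using 1 2 by auto
      have k3: "3 \<le> k" using vs(1) k_def by simp
      show False by (rule mod_arith_aux[OF k3 ik jk a b])
    qed
  qed
  have cJ: "card J = k" unfolding J_def using card_image[OF inj] by simp
  have "\<Union>J \<subseteq> set vs"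
  proof
    fix x assume "x \<in> \<Union>J"
    then obtain i where i: "i < k" "x \<in> f i" unfolding J_def by auto
    have "(i + 1) mod k < k" using mod_less_divisor[OF kpos] by auto
    then show "x \<in> set vs" using i unfolding f_def k_def by auto
  qed
  then have "card (\<Union>J) \<le> card (set vs)" by (intro card_mono) auto
  also have "\<dots> = k" using distinct_card[OF vs(2)] k_def by simp
  finally have "card (\<Union>J) \<le> card J" using cJ by simp
  moreover have "finite J" unfolding J_def by simp
  ultimately show ?thesis using JF Jne by blast
qed


lemma two_elems:
  assumes "finite S" "2 \<le> card S"
  shows "\<exists>a b. a \<in> S \<and> b \<in> S \<and> a \<noteq> b"
proof -
  have "S \<noteq> {}" using assms by auto
  then obtain a where a: "a \<in> S" by blast
  have "card (S - {a}) \<ge> 1" using assms a by simp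
  then have "S - {a} \<noteq> {}" by (metis card.empty not_one_le_zero)
  then obtain b where "b \<in> S - {a}" by blast
  then show ?thesis using a by blast
qed

lemma card2_other:
  assumes "card T = 2" "x \<in> T"
  shows "\<exists>y. T = {x, y} \<and> y \<noteq> x"
proof -
  obtain u v where uv: "T = {u, v}" "u \<noteq> v" using assms(1) by (meson card_2_iff)
  show ?thesis
  proof (cases "x = u")
    case True then show ?thesis using uv by blast
  next
    case False then have "x = v" using uv assms(2) by blast
    then show ?thesis using uv by (metis insert_commute)
  qed
qed

definition is_path :: "nat set set \<Rightarrow> nat list \<Rightarrow> bool" where
  "is_path J p \<longleftrightarrow> p \<noteq> [] \<and> distinct p \<and> set p \<subseteq> \<Union>J \<and> (\<forall>i. Suc i < length p \<longrightarrow> {p ! i, p ! Suc i} \<in> J)"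

lemma cycle_mindeg2:
  assumes fin: "finite J" and c2: "\<forall>T\<in>J. card T = 2" and ne: "J \<noteq> {}"
    and deg: "\<forall>x\<in>\<Union>J. 2 \<le> card {T\<in>J. x \<in> T}"
  shows "has_cycle J"
proof -
  have fU: "finite (\<Union>J)" using fin c2 by (metis card.infinite finite_Union zero_neq_numeral)
  obtain T0 where T0: "T0 \<in> J" using ne by blast
  have "T0 \<noteq> {}" using c2 T0 by fastforce
  then obtain x0 where x0: "x0 \<in> T0" by blast
  have p0: "is_path J [x0]" unfolding is_path_def using T0 x0 by auto
  have bnd: "\<forall>p. is_path J p \<longrightarrow> length p < card (\<Union>J) + 1"
  proof (intro allI impI)
    fix p assume "is_path J p"
    then have "distinct p" "set p \<subseteq> \<Union>J" unfolding is_path_def by auto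
    then have "length p \<le> card (\<Union>J)" using fU by (metis card_mono distinct_card)
    then show "length p < card (\<Union>J) + 1" by simp
  qed
  obtain p where p: "is_path J p" and pmax: "\<forall>q. is_path J q \<longrightarrow> length q \<le> length p"
    using ex_has_greatest_nat[of "is_path J" "[x0]" length "card (\<Union>J) + 1"] p0 bnd by blast
  have pne: "p \<noteq> []" and pd: "distinct p" and pU: "set p \<subseteq> \<Union>J"
    and pe: "\<forall>i. Suc i < length p \<longrightarrow> {p ! i, p ! Suc i} \<in> J" using p unfolding is_path_def by auto
  define x where "x = p ! 0"
  have xp: "x \<in> set p" using pne unfolding x_def by simp
  have xU: "x \<in> \<Union>J" using xp pU by blast
  have nbr: "y \<in> set p" if y: "{x, y} \<in> J" for y
  proof (rule ccontr)
    assume yn: "y \<notin> set p"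
    have "is_path J (y # p)"
      unfolding is_path_def
    proof (intro conjI allI impI)
      show "y # p \<noteq> []" by simp
      show "distinct (y # p)" using yn pd by simp
      show "set (y # p) \<subseteq> \<Union>J" using pU y by auto
    next
      fix i assume i: "Suc i < length (y # p)"
      show "{(y # p) ! i, (y # p) ! Suc i} \<in> J"
      proof (cases i)
        case 0
        then show ?thesis using y x_def by (simp add: insert_commute)
      next
        case (Suc j)
        then show ?thesis using pe i by simp
      qed
    qed
    then have "length (y # p) \<le> length p" using pmax by blast
    then show False by simp
  qed
  have fS: "finite {T\<in>J. x \<in> T}" using fin by simp
  obtain T1 T2 where T12: "T1 \<in> {T\<in>J. x \<in> T}" "T2 \<in> {T\<in>J. x \<in> T}" "T1 \<noteq> T2"
    using two_elems[OF fS] deg xU by blast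
  obtain y1 where y1: "T1 = {x, y1}" "y1 \<noteq> x" using card2_other[of T1 x] T12 c2 by auto
  obtain y2 where y2: "T2 = {x, y2}" "y2 \<noteq> x" using card2_other[of T2 x] T12 c2 by auto
  have y12: "y1 \<noteq> y2" using y1 y2 T12(3) by blast
  have "\<exists>y. {x, y} \<in> J \<and> y \<noteq> x \<and> (length p \<ge> 2 \<longrightarrow> y \<noteq> p ! 1)"
  proof (cases "length p \<ge> 2 \<and> y1 = p ! 1")
    case True
    then have "y2 \<noteq> p ! 1" using y12 by simp
    then show ?thesis using y2 T12 by auto
  next
    case False
    then show ?thesis using y1 T12 by auto
  qed
  then obtain y where y: "{x, y} \<in> J" "y \<noteq> x" "length p \<ge> 2 \<longrightarrow> y \<noteq> p ! 1" by blast
  have "y \<in> set p" using nbr[OF y(1)] .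
  then obtain j where j: "j < length p" "p ! j = y" by (metis in_set_conv_nth)
  have j0: "j \<noteq> 0"
  proof
    assume "j = 0" then show False using j y(2) x_def by simp
  qed
  have j1: "j \<noteq> 1"
  proof
    assume "j = 1"
    then have "length p \<ge> 2" using j by simp
    then show False using y(3) j \<open>j = 1\<close> by simp
  qed
  have j2: "j \<ge> 2" using j0 j1 by simp
  define vs where "vs = take (Suc j) p"
  have lv: "length vs = Suc j" using j unfolding vs_def by simp
  show ?thesis
    unfolding has_cycle_def
  proof (intro exI[of _ vs] conjI allI impI)
    show "3 \<le> length vs" using lv j2 by simp
    show "distinct vs" unfolding vs_def using pd by simp
  next
    fix i assume i: "i < length vs"
    show "{vs ! i, vs ! ((i + 1) mod length vs)} \<in> J"
    proof (cases "i < j")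
      case True
      have m: "(i + 1) mod length vs = i + 1" using True lv by simp
      have "vs ! i = p ! i" "vs ! (i + 1) = p ! Suc i" unfolding vs_def using True by simp_all
      moreover have "{p ! i, p ! Suc i} \<in> J" using pe True j by simp
      ultimately show ?thesis using m by simp
    next
      case False
      then have ij: "i = j" using i lv by simp
      have m: "(i + 1) mod length vs = 0" using ij lv by simp
      have "vs ! i = y" "vs ! 0 = x" unfolding vs_def using ij j x_def by simp_all
      then show ?thesis using m y(1) by (simp add: insert_commute)
    qed
  qed
qed


lemma cycle_from_dense:
  assumes "finite J" "\<forall>T\<in>J. card T = 2" "J \<noteq> {}" "card (\<Union>J) \<le> card J"
  shows "has_cycle J"
  using assms
proof (induction "card J" arbitrary: J rule: less_induct)
  case less
  have fin: "finite J" and c2: "\<forall>T\<in>J. card T = 2" and ne: "J \<noteq> {}" and dense: "card (\<Union>J) \<le> card J"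
    using less.prems by auto
  have fU: "finite (\<Union>J)" using fin c2 by (metis card.infinite finite_Union zero_neq_numeral)
  show ?case
  proof (cases "\<exists>x\<in>\<Union>J. card {T\<in>J. x \<in> T} \<le> 1")
    case False
    have "\<forall>x\<in>\<Union>J. 2 \<le> card {T\<in>J. x \<in> T}"
    proof
      fix x assume "x \<in> \<Union>J"
      then have "\<not> card {T\<in>J. x \<in> T} \<le> 1" using False by blast
      then show "2 \<le> card {T\<in>J. x \<in> T}" by simp
    qed
    then show ?thesis using cycle_mindeg2[OF fin c2 ne] by blast
  next
    case True
    then obtain x where x: "x \<in> \<Union>J" "card {T\<in>J. x \<in> T} \<le> 1" by blast
    define J' where "J' = {T\<in>J. x \<notin> T}"
    have split: "J = J' \<union> {T\<in>J. x \<in> T}" unfolding J'_def by auto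
    have fJ': "finite J'" using fin unfolding J'_def by simp
    have cs: "card J = card J' + card {T\<in>J. x \<in> T}"
      using split fin card_Un_disjoint[of J' "{T\<in>J. x \<in> T}"] unfolding J'_def by auto
    have "{T\<in>J. x \<in> T} \<noteq> {}" using x(1) by auto
    then have pos: "card {T\<in>J. x \<in> T} \<ge> 1" using fin by (simp add: Suc_leI card_gt_0_iff)
    have lt: "card J' < card J" using cs pos by simp
    have "\<Union>J' \<subseteq> \<Union>J - {x}" unfolding J'_def by auto
    then have "card (\<Union>J') \<le> card (\<Union>J - {x})" using fU by (intro card_mono) auto
    also have "\<dots> = card (\<Union>J) - 1" using x(1) fU by simp
    finally have u: "card (\<Union>J') \<le> card (\<Union>J) - 1" .
    obtain T where T: "T \<in> J" using ne by blast
    have "T \<subseteq> \<Union>J" using T by blast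
    then have "card T \<le> card (\<Union>J)" using fU by (intro card_mono) auto
    then have "2 \<le> card (\<Union>J)" using c2 T by simp
    then have "2 \<le> card J" using dense by simp
    then have "card J' \<ge> 1" using cs x(2) by simp
    then have ne': "J' \<noteq> {}" by (metis card.empty not_one_le_zero)
    have dense': "card (\<Union>J') \<le> card J'" using u dense cs x(2) by simp
    have c2': "\<forall>T\<in>J'. card T = 2" using c2 unfolding J'_def by simp
    have "has_cycle J'" using less.hyps[OF lt fJ' c2' ne' dense'] .
    then show ?thesis using has_cycle_mono J'_def by blast
  qed
qed

definition kends :: "nat set \<Rightarrow> nat \<times> nat" where
  "kends T = (Min T, Max T)"

lemma Kn_edgeE:
  assumes "T \<in> Kn_edges n"
  obtains u v where "T = {u, v}" "u \<in> {1..n}" "v \<in> {1..n}" "u \<noteq> v"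
  using assms unfolding Kn_edges_def by blast

lemma Kn_card2: "T \<in> Kn_edges n \<Longrightarrow> card T = 2"
  by (erule Kn_edgeE) simp

lemma Kn_sub: "T \<in> Kn_edges n \<Longrightarrow> T \<subseteq> {1..n}"
  by (erule Kn_edgeE) simp

lemma finite_Kn: "finite (Kn_edges n)"
proof -
  have "Kn_edges n \<subseteq> Pow {1..n}" using Kn_sub by blast
  then show ?thesis by (rule finite_subset) simp
qed

lemma kends_set: "T \<in> Kn_edges n \<Longrightarrow> {fst (kends T), snd (kends T)} = T"
  by (erule Kn_edgeE) (auto simp: kends_def min_def max_def)

lemma verts_Kn: "J \<subseteq> Kn_edges n \<Longrightarrow> verts kends J = \<Union>J"
  unfolding verts_def using kends_set by blast

lemma orient_Kn: "orient (Kn_edges n) kends H \<longleftrightarrow> (\<forall>T\<in>Kn_edges n. H T \<in> T)"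
proof -
  have "H T = fst (kends T) \<or> H T = snd (kends T) \<longleftrightarrow> H T \<in> T" if "T \<in> Kn_edges n" for T
    using kends_set[OF that] by blast
  then show ?thesis unfolding orient_def by blast
qed

lemma sparse_iff_nocycle:
  assumes "F \<subseteq> Kn_edges n"
  shows "(\<forall>J\<subseteq>F. J \<noteq> {} \<longrightarrow> card J < card (\<Union>J)) \<longleftrightarrow> \<not> has_cycle F"
proof
  assume sp: "\<forall>J\<subseteq>F. J \<noteq> {} \<longrightarrow> card J < card (\<Union>J)"
  show "\<not> has_cycle F"
  proof
    assume h: "has_cycle F"
    have "\<exists>J. J \<subseteq> F \<and> J \<noteq> {} \<and> card (\<Union>J) \<le> card J \<and> finite J" using cycle_dense[OF h] by simp
    then obtain J where J: "J \<subseteq> F" "J \<noteq> {}" "card (\<Union>J) \<le> card J" by blast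
    have "card J < card (\<Union>J)" using sp[rule_format, OF J(1) J(2)] .
    then show False using J(3) by simp
  qed
next
  assume nc: "\<not> has_cycle F"
  show "\<forall>J\<subseteq>F. J \<noteq> {} \<longrightarrow> card J < card (\<Union>J)"
  proof (intro allI impI)
    fix J assume J: "J \<subseteq> F" "J \<noteq> {}"
    show "card J < card (\<Union>J)"
    proof (rule ccontr)
      assume "\<not> card J < card (\<Union>J)"
      then have d: "card (\<Union>J) \<le> card J" by simp
      have JK: "J \<subseteq> Kn_edges n" using J assms by blast
      have fJ: "finite J" using finite_subset[OF JK finite_Kn] .
      have c2: "\<forall>T\<in>J. card T = 2" using JK Kn_card2 by blast
      have "has_cycle J" by (rule cycle_from_dense[OF fJ c2 J(2) d])
      then show False using nc has_cycle_mono J(1) by blast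
    qed
  qed
qed

lemma forests_eq: "{F. spanning_forest_Kn n F} = {I. forest (Kn_edges n) kends I}"
proof -
  have "spanning_forest_Kn n F \<longleftrightarrow> forest (Kn_edges n) kends F" for F
  proof (cases "F \<subseteq> Kn_edges n")
    case True
    have vJ: "verts kends J = \<Union>J" if "J \<subseteq> F" for J
      by (rule verts_Kn[of J n, OF subset_trans[OF that True]])
    have "(\<forall>J\<subseteq>F. J \<noteq> {} \<longrightarrow> card J < card (verts kends J)) \<longleftrightarrow> (\<forall>J\<subseteq>F. J \<noteq> {} \<longrightarrow> card J < card (\<Union>J))"
    proof (intro iffI allI impI)
      fix J assume h: "\<forall>J\<subseteq>F. J \<noteq> {} \<longrightarrow> card J < card (verts kends J)" and J: "J \<subseteq> F" "J \<noteq> {}"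
      show "card J < card (\<Union>J)" using h[rule_format, OF J] vJ[OF J(1)] by simp
    next
      fix J assume h: "\<forall>J\<subseteq>F. J \<noteq> {} \<longrightarrow> card J < card (\<Union>J)" and J: "J \<subseteq> F" "J \<noteq> {}"
      show "card J < card (verts kends J)" using h[rule_format, OF J] vJ[OF J(1)] by simp
    qed
    then have "forest (Kn_edges n) kends F \<longleftrightarrow> (\<forall>J\<subseteq>F. J \<noteq> {} \<longrightarrow> card J < card (\<Union>J))"
      unfolding forest_def using True by simp
    then show ?thesis unfolding spanning_forest_Kn_def using sparse_iff_nocycle[OF True] True by simp
  next
    case False
    then show ?thesis unfolding spanning_forest_Kn_def forest_def by simp
  qed
  then show ?thesis by simp
qed

theorem count_forests: "card {F. spanning_forest_Kn n F} = card (Dset (Kn_edges n) kends)"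
  unfolding forests_eq using D_F_count[OF finite_Kn] by simp

definition kor :: "nat \<Rightarrow> (nat set \<Rightarrow> nat) \<Rightarrow> bool" where
  "kor n H \<longleftrightarrow> (\<forall>T\<in>Kn_edges n. H T \<in> T)"

definition kin :: "nat \<Rightarrow> (nat set \<Rightarrow> nat) \<Rightarrow> nat \<Rightarrow> nat" where
  "kin n H x = card {T\<in>Kn_edges n. H T = x}"

definition good :: "nat \<Rightarrow> (nat \<Rightarrow> nat) \<Rightarrow> bool" where
  "good n c \<longleftrightarrow> sconfig n c \<and> stable n c \<and> (\<exists>H. kor n H \<and> (\<forall>x. kin n H x \<le> c x))"

lemma Kn_pair: "u \<in> {1..n} \<Longrightarrow> v \<in> {1..n} \<Longrightarrow> u \<noteq> v \<Longrightarrow> {u, v} \<in> Kn_edges n"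
  unfolding Kn_edges_def by blast

lemma kin_out: "kor n H \<Longrightarrow> x \<notin> {1..n} \<Longrightarrow> kin n H x = 0"
proof -
  assume k: "kor n H" and x: "x \<notin> {1..n}"
  have "{T\<in>Kn_edges n. H T = x} = {}"
  proof (intro equalityI subsetI)
    fix T assume "T \<in> {T\<in>Kn_edges n. H T = x}"
    then have "T \<in> Kn_edges n" "H T = x" by auto
    then have "x \<in> T" "T \<subseteq> {1..n}" using k Kn_sub unfolding kor_def by auto
    then show "T \<in> {}" using x by blast
  qed simp
  then show ?thesis unfolding kin_def by (simp only: card.empty)
qed

lemma kin_nbr:
  assumes k: "kor n H" and x: "x \<in> {1..n}"
  shows "kin n H x = card {u\<in>{1..n}. u \<noteq> x \<and> H {u, x} = x}"
proof -
  have "bij_betw (\<lambda>u. {u, x}) {u\<in>{1..n}. u \<noteq> x \<and> H {u, x} = x} {T\<in>Kn_edges n. H T = x}"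
  proof (rule bij_betw_imageI)
    show "inj_on (\<lambda>u. {u, x}) {u\<in>{1..n}. u \<noteq> x \<and> H {u, x} = x}"
      by (rule inj_onI) (auto simp: doubleton_eq_iff)
  next
    show "(\<lambda>u. {u, x}) ` {u\<in>{1..n}. u \<noteq> x \<and> H {u, x} = x} = {T\<in>Kn_edges n. H T = x}"
    proof (intro equalityI subsetI)
      fix T assume "T \<in> (\<lambda>u. {u, x}) ` {u\<in>{1..n}. u \<noteq> x \<and> H {u, x} = x}"
      then obtain u where u: "u \<in> {1..n}" "u \<noteq> x" "H {u, x} = x" "T = {u, x}" by blast
      then show "T \<in> {T\<in>Kn_edges n. H T = x}" using Kn_pair[OF u(1) x u(2)] by simp
    next
      fix T assume T: "T \<in> {T\<in>Kn_edges n. H T = x}"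
      then have TK: "T \<in> Kn_edges n" and HT: "H T = x" by auto
      then have xT: "x \<in> T" using k unfolding kor_def by auto
      obtain a b where ab: "T = {a, b}" "a \<in> {1..n}" "b \<in> {1..n}" "a \<noteq> b" using TK by (rule Kn_edgeE)
      show "T \<in> (\<lambda>u. {u, x}) ` {u\<in>{1..n}. u \<noteq> x \<and> H {u, x} = x}"
      proof (cases "x = a")
        case True
        then have "T = {b, x}" using ab by auto
        then show ?thesis using ab True HT by auto
      next
        case False
        then have "x = b" using xT ab by auto
        then have "T = {a, x}" using ab by auto
        then show ?thesis using ab False HT by auto
      qed
    qed
  qed
  then show ?thesis unfolding kin_def by (simp add: bij_betw_same_card)
qed

lemma kin_le: "kor n H \<Longrightarrow> kin n H x \<le> n - 1"
proof (cases "x \<in> {1..n}")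
  case True
  assume k: "kor n H"
  have "kin n H x = card {u\<in>{1..n}. u \<noteq> x \<and> H {u, x} = x}" by (rule kin_nbr[OF k True])
  also have "\<dots> \<le> card ({1..n} - {x})" by (intro card_mono) auto
  also have "\<dots> = n - 1" using True by simp
  finally show ?thesis .
next
  case False
  assume "kor n H"
  then show ?thesis using kin_out False by simp
qed

lemma kin_sum:
  assumes k: "kor n H"
  shows "(\<Sum>x\<in>{1..n}. kin n H x) = card (Kn_edges n)"
proof -
  have U: "Kn_edges n = (\<Union>x\<in>{1..n}. {T\<in>Kn_edges n. H T = x})"
  proof (intro equalityI subsetI)
    fix T assume T: "T \<in> Kn_edges n"
    then have "H T \<in> T" "T \<subseteq> {1..n}" using k Kn_sub unfolding kor_def by auto
    then show "T \<in> (\<Union>x\<in>{1..n}. {T\<in>Kn_edges n. H T = x})" using T by blast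
  qed auto
  have "card (\<Union>x\<in>{1..n}. {T\<in>Kn_edges n. H T = x}) = (\<Sum>x\<in>{1..n}. card {T\<in>Kn_edges n. H T = x})"
    by (rule card_UN_disjoint) (auto simp: finite_Kn)
  then show ?thesis using U unfolding kin_def by simp
qed

lemma kor_Min: "kor n (\<lambda>T. Min T)"
  unfolding kor_def
proof
  fix T assume "T \<in> Kn_edges n"
  then obtain u v where "T = {u, v}" by (rule Kn_edgeE)
  then show "Min T \<in> T" by (simp add: min_def)
qed

lemma Dset_Kn: "Dset (Kn_edges n) kends = {kin n H | H. kor n H}"
  unfolding Dset_def kor_def kin_def indeg_def orient_Kn ..


lemma topple_sconfig:
  assumes t: "ssm_topple n c c'" and sc: "sconfig n c"
  shows "sconfig n c'"
proof -
  obtain i S where i: "i \<in> {1..n}" and S: "S \<subseteq> {0..n} - {i}"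
    and c': "c' = (\<lambda>j. if j = i then c i - card S else if j \<in> S \<and> j \<noteq> 0 then c j + 1 else c j)"
    using t unfolding ssm_topple_def by blast
  show ?thesis unfolding sconfig_def
  proof (intro allI impI)
    fix j assume j: "j \<notin> {1..n}"
    then have "j \<noteq> i" using i by blast
    moreover have "\<not> (j \<in> S \<and> j \<noteq> 0)" using j S by auto
    ultimately show "c' j = 0" using c' sc j unfolding sconfig_def by simp
  qed
qed

lemma topple_dom:
  assumes t: "ssm_topple n c c'" and k: "kor n H" and le: "\<forall>x. kin n H x \<le> c x"
  shows "\<exists>H'. kor n H' \<and> (\<forall>x. kin n H' x \<le> c' x)"
proof -
  obtain i S where i: "i \<in> {1..n}" "c i \<ge> n" and S: "S \<subseteq> {0..n} - {i}"
    and c': "c' = (\<lambda>j. if j = i then c i - card S else if j \<in> S \<and> j \<noteq> 0 then c j + 1 else c j)"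
    using t unfolding ssm_topple_def by blast
  define H' where "H' = (\<lambda>T. if i \<in> T then (if \<exists>j\<in>S. j \<in> T \<and> j \<noteq> i then (SOME j. j \<in> S \<and> j \<in> T \<and> j \<noteq> i) else i) else H T)"
  have other: "\<exists>u. T = {i, u} \<and> u \<noteq> i \<and> u \<in> {1..n}" if T: "T \<in> Kn_edges n" and iT: "i \<in> T" for T
  proof -
    obtain a b where ab: "T = {a, b}" "a \<in> {1..n}" "b \<in> {1..n}" "a \<noteq> b" using T by (rule Kn_edgeE)
    show ?thesis
    proof (cases "i = a")
      case True then show ?thesis using ab by blast
    next
      case False then have "i = b" using iT ab by blast
      then show ?thesis using ab by (metis insert_commute)
    qed
  qed
  have H'val: "H' {i, u} = (if u \<in> S then u else i)" if u: "u \<noteq> i" for u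
  proof (cases "u \<in> S")
    case True
    have ex: "\<exists>j\<in>S. j \<in> {i, u} \<and> j \<noteq> i" using True u by blast
    have "(SOME j. j \<in> S \<and> j \<in> {i, u} \<and> j \<noteq> i) = u"
      by (rule some_equality) (use True u in auto)
    then show ?thesis using ex True unfolding H'_def by simp
  next
    case False
    have ne: "\<not> (\<exists>j\<in>S. j \<in> {i, u} \<and> j \<noteq> i)" using False by blast
    have "H' {i, u} = i" unfolding H'_def using ne by (simp only: if_False if_True insert_iff simp_thms)
    then show ?thesis using False by simp
  qed
  have kor': "kor n H'"
    unfolding kor_def
  proof
    fix T assume T: "T \<in> Kn_edges n"
    show "H' T \<in> T"
    proof (cases "i \<in> T")
      case True
      then obtain u where u: "T = {i, u}" "u \<noteq> i" using other[OF T] by blast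
      then show ?thesis using H'val[OF u(2)] by simp
    next
      case False
      then have "H' T = H T" unfolding H'_def by simp
      then show ?thesis using k T unfolding kor_def by simp
    qed
  qed
  have n1: "n \<ge> 1" using i by simp
  have bi: "kin n H' i \<le> c' i"
  proof -
    define A where "A = {1..n} - {i} - S"
    have sub: "{T\<in>Kn_edges n. H' T = i} \<subseteq> (\<lambda>u. {i, u}) ` A"
    proof
      fix T assume T: "T \<in> {T\<in>Kn_edges n. H' T = i}"
      then have TK: "T \<in> Kn_edges n" and HT: "H' T = i" by auto
      have iT: "i \<in> T"
      proof (rule ccontr)
        assume "i \<notin> T"
        then have "H' T = H T" unfolding H'_def by simp
        then have "i \<in> T" using HT k TK unfolding kor_def by auto
        then show False using \<open>i \<notin> T\<close> by simp
      qed
      obtain u where u: "T = {i, u}" "u \<noteq> i" "u \<in> {1..n}" using other[OF TK iT] by blast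
      have "u \<notin> S" using H'val[OF u(2)] HT u(1,2) by auto
      then show "T \<in> (\<lambda>u. {i, u}) ` A" using u unfolding A_def by blast
    qed
    have "kin n H' i \<le> card ((\<lambda>u. {i, u}) ` A)" unfolding kin_def
      by (rule card_mono[OF _ sub]) (simp add: A_def)
    also have "\<dots> \<le> card A" by (rule card_image_le) (simp add: A_def)
    finally have kA: "kin n H' i \<le> card A" .
    have AS: "A \<union> S \<subseteq> insert 0 ({1..n} - {i})" using S unfolding A_def by auto
    have dj: "A \<inter> S = {}" unfolding A_def by auto
    have fS: "finite S" using S finite_subset by (metis finite_Diff finite_atLeastAtMost)
    have fA: "finite A" unfolding A_def by simp
    have "card A + card S = card (A \<union> S)" using card_Un_disjoint[OF fA fS dj] by simp
    also have "\<dots> \<le> card (insert 0 ({1..n} - {i}))" by (rule card_mono[OF _ AS]) simp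
    also have "\<dots> = n" using i n1 by simp
    finally have "card A + card S \<le> n" .
    then have "card A \<le> c i - card S" using i(2) by simp
    then show ?thesis using kA c' by simp
  qed
  have bx: "kin n H' x \<le> c' x" if xi: "x \<noteq> i" for x
  proof (cases "x \<in> {1..n}")
    case False
    then show ?thesis using kin_out[OF kor' False] by simp
  next
    case True
    have x0: "x \<noteq> 0" using True by simp
    define B where "B = (if x \<in> S then {{i, x}} else {})"
    have sub: "{T\<in>Kn_edges n. H' T = x} \<subseteq> {T\<in>Kn_edges n. H T = x} \<union> B"
    proof
      fix T assume T: "T \<in> {T\<in>Kn_edges n. H' T = x}"
      then have TK: "T \<in> Kn_edges n" and HT: "H' T = x" by auto
      show "T \<in> {T\<in>Kn_edges n. H T = x} \<union> B"
      proof (cases "i \<in> T")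
        case False
        then have "H T = x" using HT unfolding H'_def by simp
        then show ?thesis using TK by simp
      next
        case True
        obtain u where u: "T = {i, u}" "u \<noteq> i" using other[OF TK True] by blast
        have "u \<in> S" "u = x" using H'val[OF u(2)] HT u(1) xi by (auto split: if_splits)
        then show ?thesis using u unfolding B_def by simp
      qed
    qed
    have "kin n H' x \<le> card ({T\<in>Kn_edges n. H T = x} \<union> B)" unfolding kin_def
      by (rule card_mono[OF _ sub]) (simp add: B_def finite_Kn)
    also have "\<dots> \<le> card {T\<in>Kn_edges n. H T = x} + card B" by (rule card_Un_le)
    also have "\<dots> \<le> c x + (if x \<in> S then 1 else 0)" using le[rule_format, of x] unfolding kin_def B_def by simp
    also have "\<dots> = c' x" using c' xi x0 by simp
    finally show ?thesis .
  qed
  have "\<forall>x. kin n H' x \<le> c' x"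
  proof
    fix x show "kin n H' x \<le> c' x" using bi bx by (cases "x = i") auto
  qed
  then show ?thesis using kor' by blast
qed

lemma step_good:
  assumes st: "ssm_step n c c'" and g: "good n c"
  shows "good n c'"
proof -
  obtain i where i: "i \<in> {1..n}" and stab: "stabilises_to n (c(i := c i + 1)) c'"
    using st unfolding ssm_step_def by blast
  have rt: "(ssm_topple n)\<^sup>*\<^sup>* (c(i := c i + 1)) c'" and stc: "stable n c'"
    using stab unfolding stabilises_to_def by auto
  obtain H where H: "kor n H" "\<forall>x. kin n H x \<le> c x" using g unfolding good_def by blast
  have P0: "sconfig n (c(i := c i + 1)) \<and> (\<exists>H. kor n H \<and> (\<forall>x. kin n H x \<le> (c(i := c i + 1)) x))"
  proof
    show "sconfig n (c(i := c i + 1))" using g i unfolding good_def sconfig_def by auto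
    have "\<forall>x. kin n H x \<le> (c(i := c i + 1)) x"
    proof
      fix x show "kin n H x \<le> (c(i := c i + 1)) x" using H(2)[rule_format, of x] by (cases "x = i") simp_all
    qed
    then show "\<exists>H. kor n H \<and> (\<forall>x. kin n H x \<le> (c(i := c i + 1)) x)" using H(1) by blast
  qed
  have "sconfig n c' \<and> (\<exists>H. kor n H \<and> (\<forall>x. kin n H x \<le> c' x))"
    using rt P0
  proof (induction rule: rtranclp_induct)
    case base then show ?case by simp
  next
    case (step y z)
    then have "sconfig n y" "\<exists>H. kor n H \<and> (\<forall>x. kin n H x \<le> y x)" by auto
    then obtain H1 where "kor n H1" "\<forall>x. kin n H1 x \<le> y x" by blast
    then have "\<exists>H. kor n H \<and> (\<forall>x. kin n H x \<le> z x)" using topple_dom[OF step(2)] by blast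
    moreover have "sconfig n z" using topple_sconfig[OF step(2) \<open>sconfig n y\<close>] .
    ultimately show ?case by blast
  qed
  then show ?thesis using stc unfolding good_def by blast
qed

lemma steps_good: "(ssm_step n)\<^sup>*\<^sup>* c c' \<Longrightarrow> good n c \<Longrightarrow> good n c'"
  by (induction rule: rtranclp_induct) (auto intro: step_good)


lemma reach_up:
  assumes gs: "sconfig n g" and gst: "stable n g"
  shows "sconfig n c \<Longrightarrow> (\<forall>x. c x \<le> g x) \<Longrightarrow> (ssm_step n)\<^sup>*\<^sup>* c g"
proof (induction "\<Sum>x\<in>{1..n}. g x - c x" arbitrary: c rule: less_induct)
  case less
  show ?case
  proof (cases "\<exists>i\<in>{1..n}. c i < g i")
    case False
    have "c = g"
    proof
      fix x show "c x = g x"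
      proof (cases "x \<in> {1..n}")
        case True
        have "\<not> c x < g x" using False True by blast
        then show ?thesis using less.prems(2)[rule_format, of x] by simp
      next
        case False
        then show ?thesis using less.prems(1) gs unfolding sconfig_def by simp
      qed
    qed
    then show ?thesis by simp
  next
    case True
    then obtain i where i: "i \<in> {1..n}" "c i < g i" by blast
    define c1 where "c1 = c(i := c i + 1)"
    have stc: "stable n c" using gst less.prems(2) unfolding stable_def by (meson le_trans)
    have c1g: "\<forall>x. c1 x \<le> g x" using less.prems(2) i(2) unfolding c1_def by auto
    have stc1: "stable n c1" using gst c1g unfolding stable_def by (meson le_trans)
    have sc1: "sconfig n c1" using less.prems(1) i(1) unfolding sconfig_def c1_def by auto
    have step: "ssm_step n c c1"
      unfolding ssm_step_def stabilises_to_def using less.prems(1) stc stc1 i(1) c1_def by blast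
    have "(\<Sum>x\<in>{1..n}. g x - c1 x) < (\<Sum>x\<in>{1..n}. g x - c x)"
    proof (rule sum_strict_mono_ex1)
      show "finite {1..n}" by simp
      show "\<forall>x\<in>{1..n}. g x - c1 x \<le> g x - c x" unfolding c1_def by auto
      show "\<exists>x\<in>{1..n}. g x - c1 x < g x - c x" using i unfolding c1_def by auto
    qed
    then have "(ssm_step n)\<^sup>*\<^sup>* c1 g" using less.hyps sc1 c1g by blast
    then show ?thesis by (rule converse_rtranclp_into_rtranclp[of "ssm_step n", OF step])
  qed
qed

lemma topples_down:
  "finite W \<Longrightarrow> W \<subseteq> {1..n} \<Longrightarrow> (\<forall>w\<in>W. c w = n) \<Longrightarrow> (ssm_topple n)\<^sup>*\<^sup>* c (\<lambda>j. if j \<in> W then n - 1 else c j)"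
proof (induction W rule: finite_induct)
  case empty
  then show ?case by simp
next
  case (insert w W)
  define cW where "cW = (\<lambda>j. if j \<in> W then n - 1 else c j)"
  have r1: "(ssm_topple n)\<^sup>*\<^sup>* c cW" using insert.IH insert.prems unfolding cW_def by simp
  have wn: "w \<in> {1..n}" using insert.prems by simp
  have cWw: "cW w = n" using insert.prems insert.hyps unfolding cW_def by simp
  have t: "ssm_topple n cW (\<lambda>j. if j \<in> insert w W then n - 1 else c j)"
    unfolding ssm_topple_def
  proof (intro bexI[of _ w] conjI exI[of _ "{0}"])
    show "w \<in> {1..n}" by (rule wn)
    show "n \<le> cW w" using cWw by simp
    show "{0} \<subseteq> {0..n} - {w}" using wn by auto
    show "(\<lambda>j. if j \<in> insert w W then n - 1 else c j) =
      (\<lambda>j. if j = w then cW w - card {0::nat} else if j \<in> {0} \<and> j \<noteq> 0 then cW j + 1 else cW j)"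
      using cWw unfolding cW_def by auto
  qed
  show ?case by (rule rtranclp.rtrancl_into_rtrancl[of "ssm_topple n", OF r1 t])
qed

definition conf :: "nat \<Rightarrow> (nat set \<Rightarrow> nat) \<Rightarrow> nat \<Rightarrow> nat \<Rightarrow> nat" where
  "conf n H k x = (if x \<notin> {1..n} then 0 else if k < x then n - 1
     else card {u\<in>{1..n}. u \<noteq> x \<and> (u < x \<or> u \<le> k) \<and> H {u, x} = x})"

lemma conf_sconfig: "sconfig n (conf n H k)"
  unfolding sconfig_def conf_def by simp

lemma conf_stable: "stable n (conf n H k)"
  unfolding stable_def
proof
  fix x assume x: "x \<in> {1..n}"
  have "card {u\<in>{1..n}. u \<noteq> x \<and> (u < x \<or> u \<le> k) \<and> H {u, x} = x} \<le> card ({1..n} - {x})"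
    by (intro card_mono) auto
  also have "\<dots> = n - 1" using x by simp
  finally show "conf n H k x \<le> n - 1" unfolding conf_def by simp
qed

lemma conf_0: "conf n H 0 = (\<lambda>x. if x \<in> {1..n} then n - 1 else 0)"
  unfolding conf_def by auto

lemma conf_n: "kor n H \<Longrightarrow> conf n H n = kin n H"
proof
  fix x assume k: "kor n H"
  show "conf n H n x = kin n H x"
  proof (cases "x \<in> {1..n}")
    case True
    have "{u\<in>{1..n}. u \<noteq> x \<and> (u < x \<or> u \<le> n) \<and> H {u, x} = x} = {u\<in>{1..n}. u \<noteq> x \<and> H {u, x} = x}" by auto
    then show ?thesis using kin_nbr[OF k True] True unfolding conf_def by simp
  next
    case False
    then show ?thesis using kin_out[OF k False] unfolding conf_def by simp
  qed
qed


lemma conf_step: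
  assumes k: "kor n H" and kn: "k < n"
  shows "ssm_step n (conf n H k) (conf n H (Suc k))"
proof -
  define v where "v = Suc k"
  have vn: "v \<in> {1..n}" using kn v_def by simp
  define c where "c = conf n H k"
  have cv: "c v = n - 1" unfolding c_def conf_def using vn v_def by simp
  define c0 where "c0 = c(v := c v + 1)"
  have c0v: "c0 v = n" using cv kn unfolding c0_def by simp
  define L where "L = {Suc v..n}"
  define Ev where "Ev = {u\<in>{1..n}. u < v \<and> H {u, v} = u}"
  define Iv where "Iv = {u\<in>{1..n}. u < v \<and> H {u, v} = v}"
  define S where "S = insert 0 (L \<union> Ev)"
  have SS: "S \<subseteq> {0..n} - {v}" unfolding S_def L_def Ev_def using vn by auto
  define c1 where "c1 = (\<lambda>j. if j = v then c0 v - card S else if j \<in> S \<and> j \<noteq> 0 then c0 j + 1 else c0 j)"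
  have t1: "ssm_topple n c0 c1"
    unfolding ssm_topple_def
  proof (intro bexI[of _ v] conjI exI[of _ S])
    show "v \<in> {1..n}" by (rule vn)
    show "n \<le> c0 v" using c0v by simp
    show "S \<subseteq> {0..n} - {v}" by (rule SS)
    show "c1 = (\<lambda>j. if j = v then c0 v - card S else if j \<in> S \<and> j \<noteq> 0 then c0 j + 1 else c0 j)"
      unfolding c1_def ..
  qed
  have Ln: "\<forall>w\<in>L. c1 w = n"
  proof
    fix w assume w: "w \<in> L"
    then have wv: "w \<noteq> v" and wS: "w \<in> S" and w0: "w \<noteq> 0" and wn: "w \<in> {1..n}" and kw: "k < w"
      unfolding L_def S_def v_def by auto
    have "c w = n - 1" unfolding c_def conf_def using wn kw by simp
    then show "c1 w = n" unfolding c1_def c0_def using wv wS w0 kn by simp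
  qed
  define c2 where "c2 = (\<lambda>j. if j \<in> L then n - 1 else c1 j)"
  have t2: "(ssm_topple n)\<^sup>*\<^sup>* c1 c2" unfolding c2_def
    by (rule topples_down) (use Ln in \<open>auto simp: L_def\<close>)
  have fin: "finite L" "finite Ev" "finite Iv" unfolding L_def Ev_def Iv_def by auto
  have cardS: "card S = 1 + (n - v) + card Ev"
  proof -
    have "0 \<notin> L \<union> Ev" unfolding L_def Ev_def by auto
    then have "card S = 1 + card (L \<union> Ev)" unfolding S_def using fin by simp
    moreover have "card (L \<union> Ev) = card L + card Ev"
      by (rule card_Un_disjoint) (use fin in \<open>auto simp: L_def Ev_def\<close>)
    moreover have "card L = n - v" unfolding L_def by simp
    ultimately show ?thesis by simp
  qed
  have EI: "card Ev + card Iv = k"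
  proof -
    have "Ev \<union> Iv = {1..k}"
    proof (intro equalityI subsetI)
      fix u assume "u \<in> Ev \<union> Iv" then show "u \<in> {1..k}" unfolding Ev_def Iv_def v_def by auto
    next
      fix u assume u: "u \<in> {1..k}"
      then have un: "u \<in> {1..n}" and uv: "u < v" and une: "u \<noteq> v" using kn v_def by auto
      have "{u, v} \<in> Kn_edges n" by (rule Kn_pair[OF un vn une])
      then have "H {u, v} \<in> {u, v}" using k unfolding kor_def by blast
      then show "u \<in> Ev \<union> Iv" unfolding Ev_def Iv_def using un uv by auto
    qed
    moreover have "Ev \<inter> Iv = {}" unfolding Ev_def Iv_def by auto
    ultimately have "card Ev + card Iv = card {1..k}" using fin card_Un_disjoint by metis
    then show ?thesis by simp
  qed
  have c2eq: "c2 = conf n H (Suc k)"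
  proof
    fix j
    show "c2 j = conf n H (Suc k) j"
    proof (cases "j \<in> {1..n}")
      case False
      have jL: "j \<notin> L" and jv: "j \<noteq> v" and jS: "\<not> (j \<in> S \<and> j \<noteq> 0)"
        using False vn unfolding L_def S_def Ev_def by auto
      have "c2 j = c j" unfolding c2_def c1_def c0_def using jL jv jS by simp
      then show ?thesis unfolding c_def conf_def using False by simp
    next
      case True
      show ?thesis
      proof (cases "v < j")
        case True
        then have "j \<in> L" using \<open>j \<in> {1..n}\<close> unfolding L_def by auto
        then show ?thesis unfolding c2_def conf_def using True \<open>j \<in> {1..n}\<close> v_def by simp
      next
        case False
        note jn = \<open>j \<in> {1..n}\<close>
        have jL: "j \<notin> L" using False unfolding L_def by auto
        show ?thesis
        proof (cases "j = v")
          case True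
          have "c2 j = n - (1 + (n - v) + card Ev)" unfolding c2_def c1_def using jL True c0v cardS by simp
          also have "\<dots> = card Iv" using EI kn v_def by simp
          also have "Iv = {u\<in>{1..n}. u \<noteq> j \<and> (u < j \<or> u \<le> Suc k) \<and> H {u, j} = j}"
            unfolding Iv_def using True v_def by auto
          finally show ?thesis unfolding conf_def using jn True v_def by simp
        next
          case False
          then have jv: "j < v" using \<open>\<not> v < j\<close> by simp
          define Cj where "Cj = {u\<in>{1..n}. u \<noteq> j \<and> (u < j \<or> u \<le> k) \<and> H {u, j} = j}"
          have fC: "finite Cj" unfolding Cj_def by simp
          have vC: "v \<notin> Cj" unfolding Cj_def using jv v_def by auto
          have cj: "c j = card Cj" unfolding c_def conf_def Cj_def using jn jv v_def by simp
          have jS: "(j \<in> S \<and> j \<noteq> 0) \<longleftrightarrow> j \<in> Ev" unfolding S_def using jL jn by auto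
          have jE: "j \<in> Ev \<longleftrightarrow> H {v, j} = j" unfolding Ev_def using jn jv by (auto simp: insert_commute)
          have c2j: "c2 j = (if H {v, j} = j then card Cj + 1 else card Cj)"
            unfolding c2_def c1_def c0_def using jL False jS jE cj by simp
          have C': "{u\<in>{1..n}. u \<noteq> j \<and> (u < j \<or> u \<le> Suc k) \<and> H {u, j} = j}
                = (if H {v, j} = j then insert v Cj else Cj)"
            unfolding Cj_def using vn v_def jv by (auto simp: le_Suc_eq)
          have "conf n H (Suc k) j = card (if H {v, j} = j then insert v Cj else Cj)"
            unfolding conf_def using jn jv v_def C' by simp
          also have "\<dots> = (if H {v, j} = j then card Cj + 1 else card Cj)" using fC vC by simp
          finally show ?thesis using c2j by simp
        qed
      qed
    qed
  qed
  have "(ssm_topple n)\<^sup>*\<^sup>* c0 c2" by (rule converse_rtranclp_into_rtranclp[of "ssm_topple n", OF t1 t2])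
  then have "stabilises_to n c0 (conf n H (Suc k))"
    unfolding stabilises_to_def using c2eq conf_stable by simp
  then show ?thesis unfolding ssm_step_def c0_def c_def using conf_sconfig conf_stable vn by blast
qed

lemma conf_steps: "kor n H \<Longrightarrow> k \<le> n \<Longrightarrow> (ssm_step n)\<^sup>*\<^sup>* (conf n H 0) (conf n H k)"
proof (induction k)
  case 0 then show ?case by simp
next
  case (Suc k)
  then have "(ssm_step n)\<^sup>*\<^sup>* (conf n H 0) (conf n H k)" by simp
  moreover have "ssm_step n (conf n H k) (conf n H (Suc k))" using conf_step Suc.prems by simp
  ultimately show ?case by (rule rtranclp.rtrancl_into_rtrancl[of "ssm_step n"])
qed

lemma reach_kin: "kor n H \<Longrightarrow> (ssm_step n)\<^sup>*\<^sup>* (\<lambda>x. if x \<in> {1..n} then n - 1 else 0) (kin n H)"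
  using conf_steps[of n H n] conf_0[of n H] conf_n[of n H] by simp


definition Mx :: "nat \<Rightarrow> nat \<Rightarrow> nat" where
  "Mx n = (\<lambda>x. if x \<in> {1..n} then n - 1 else 0)"

lemma Mx_sconfig: "sconfig n (Mx n)" unfolding sconfig_def Mx_def by simp
lemma Mx_stable: "stable n (Mx n)" unfolding stable_def Mx_def by simp

lemma le_Mx: "sconfig n c \<Longrightarrow> stable n c \<Longrightarrow> \<forall>x. c x \<le> Mx n x"
  unfolding sconfig_def stable_def Mx_def by auto

lemma kin_good: "kor n H \<Longrightarrow> good n (kin n H)"
  unfolding good_def sconfig_def stable_def using kin_out kin_le by blast

lemma kin_sconfig: "kor n H \<Longrightarrow> sconfig n (kin n H)"
  unfolding sconfig_def using kin_out by blast

lemma good_SR: "good n c \<Longrightarrow> SR n c"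
proof -
  assume g: "good n c"
  then have sc: "sconfig n c" and st: "stable n c" unfolding good_def by auto
  obtain H where H: "kor n H" "\<forall>x. kin n H x \<le> c x" using g unfolding good_def by blast
  have "(ssm_step n)\<^sup>*\<^sup>* c' c" if r: "(ssm_step n)\<^sup>*\<^sup>* c c'" for c'
  proof -
    have g': "good n c'" by (rule steps_good[OF r g])
    then have "sconfig n c'" "stable n c'" unfolding good_def by auto
    then have r1: "(ssm_step n)\<^sup>*\<^sup>* c' (Mx n)"
      using reach_up[OF Mx_sconfig Mx_stable] le_Mx by blast
    have r2: "(ssm_step n)\<^sup>*\<^sup>* (Mx n) (kin n H)" using reach_kin[OF H(1)] unfolding Mx_def .
    have r3: "(ssm_step n)\<^sup>*\<^sup>* (kin n H) c" using reach_up[OF sc st kin_sconfig[OF H(1)]] H(2) by blast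
    show ?thesis using r1 r2 r3 by (meson rtranclp_trans)
  qed
  then show "SR n c" unfolding SR_def using sc st by blast
qed

lemma SR_good: "SR n c \<Longrightarrow> good n c"
proof -
  assume s: "SR n c"
  then have sc: "sconfig n c" and st: "stable n c" unfolding SR_def by auto
  have r1: "(ssm_step n)\<^sup>*\<^sup>* c (Mx n)" using reach_up[OF Mx_sconfig Mx_stable sc] le_Mx[OF sc st] by blast
  have r2: "(ssm_step n)\<^sup>*\<^sup>* (Mx n) (kin n (\<lambda>T. Min T))" using reach_kin[OF kor_Min] unfolding Mx_def .
  have "(ssm_step n)\<^sup>*\<^sup>* c (kin n (\<lambda>T. Min T))" using r1 r2 by (rule rtranclp_trans)
  then have "(ssm_step n)\<^sup>*\<^sup>* (kin n (\<lambda>T. Min T)) c" using s unfolding SR_def by blast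
  then show "good n c" using steps_good kin_good[OF kor_Min] by blast
qed

lemma SR_iff_good: "SR n c \<longleftrightarrow> good n c"
  using SR_good good_SR by blast

lemma minimal_iff: "minimal_SR n c \<longleftrightarrow> c \<in> Dset (Kn_edges n) kends"
proof
  assume m: "minimal_SR n c"
  then have g: "good n c" using SR_good unfolding minimal_SR_def by blast
  obtain H where H: "kor n H" "\<forall>x. kin n H x \<le> c x" using g unfolding good_def by blast
  have "SR n (kin n H)" using good_SR kin_good[OF H(1)] by blast
  moreover have "\<forall>i\<in>{1..n}. kin n H i \<le> c i" using H(2) by blast
  ultimately have "kin n H = c" using m unfolding minimal_SR_def by blast
  then show "c \<in> Dset (Kn_edges n) kends" unfolding Dset_Kn using H(1) by blast
next
  assume "c \<in> Dset (Kn_edges n) kends"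
  then obtain H where H: "kor n H" "c = kin n H" unfolding Dset_Kn by blast
  have sr: "SR n c" using good_SR kin_good[OF H(1)] H(2) by simp
  have "\<not> (\<exists>c'. SR n c' \<and> c' \<noteq> c \<and> (\<forall>i\<in>{1..n}. c' i \<le> c i))"
  proof
    assume "\<exists>c'. SR n c' \<and> c' \<noteq> c \<and> (\<forall>i\<in>{1..n}. c' i \<le> c i)"
    then obtain c' where c': "SR n c'" "c' \<noteq> c" "\<forall>i\<in>{1..n}. c' i \<le> c i" by blast
    have g': "good n c'" using SR_good c'(1) by blast
    obtain H' where H': "kor n H'" "\<forall>x. kin n H' x \<le> c' x" using g' unfolding good_def by blast
    have "(\<Sum>x\<in>{1..n}. c x) = card (Kn_edges n)" using kin_sum[OF H(1)] H(2) by simp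
    also have "\<dots> = (\<Sum>x\<in>{1..n}. kin n H' x)" using kin_sum[OF H'(1)] by simp
    also have "\<dots> \<le> (\<Sum>x\<in>{1..n}. c' x)" using H'(2) by (intro sum_mono) blast
    finally have s1: "(\<Sum>x\<in>{1..n}. c x) \<le> (\<Sum>x\<in>{1..n}. c' x)" .
    have eq: "\<forall>i\<in>{1..n}. c' i = c i"
    proof (rule ccontr)
      assume "\<not> (\<forall>i\<in>{1..n}. c' i = c i)"
      then have "\<exists>i\<in>{1..n}. c' i < c i" using c'(3) by force
      then have "(\<Sum>x\<in>{1..n}. c' x) < (\<Sum>x\<in>{1..n}. c x)"
        using c'(3) by (intro sum_strict_mono_ex1) auto
      then show False using s1 by simp
    qed
    have scc': "sconfig n c'" using g' unfolding good_def by blast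
    have scc: "sconfig n c" using kin_sconfig[OF H(1)] H(2) by simp
    have "c' = c"
    proof
      fix x show "c' x = c x"
        using eq scc scc' unfolding sconfig_def by (cases "x \<in> {1..n}") auto
    qed
    then show False using c'(2) by simp
  qed
  then show "minimal_SR n c" unfolding minimal_SR_def using sr by blast
qed

theorem proposition3p9:
  fixes n :: nat
  assumes "n \<ge> 1"
  shows "card {c. minimal_SR n c} = card {F. spanning_forest_Kn n F}"
proof -
  have "{c. minimal_SR n c} = Dset (Kn_edges n) kends" using minimal_iff by blast
  then show ?thesis using count_forests by simp
qed

end
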